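(* Let $W \in \mathcal{D}_1$. Then $L(LWR)^{-1}R \in \mathcal{D}_1$, and $R$ is a prefix of $L(LWR)^{-1}R$, i.e. $L(LWR)^{-1}R = RU$ for some $U \in \mathcal{D}_1$.
   Context: $L = \begin{pmatrix} 1 & 0 \\ 1 & 1\end{pmatrix}$ and $R = \begin{pmatrix} 1 & 1 \\ 0 & 1\end{pmatrix}$. $\mathcal{D}_1$ denotes the set of $2\times 2$ matrices with nonnegative integer entries and determinant $1$. The map sending a finite word over the alphabet $\{L,R\}$ to the product of the corresponding matrices is an isomorphism of the free monoid $\{L,R\}^*$ onto $\mathcal{D}_1$ (the empty word maps to the identity), so elements of $\mathcal{D}_1$ are identified with words over $\{L,R\}$; "prefix" refers to this word representation. *)

theory Defs
  imports "HOL-Analysis.Analysis"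
begin

definition Lm :: "int^2^2" where
  "Lm = vector [vector [1, 0], vector [1, 1]]"

definition Rm :: "int^2^2" where
  "Rm = vector [vector [1, 1], vector [0, 1]]"

definition D1 :: "(int^2^2) set" where
  "D1 = {M. (\<forall>i j. 0 \<le> M $ i $ j) \<and> det M = 1}"

end

theory Submission
  imports Defs
begin

definition mk :: "int \<Rightarrow> int \<Rightarrow> int \<Rightarrow> int \<Rightarrow> int^2^2" where
  "mk a b c d = vector [vector [a, b], vector [c, d]]"

lemma mk_nth[simp]: "mk a b c d $ 1 $ 1 = a" "mk a b c d $ 1 $ 2 = b"
  "mk a b c d $ 2 $ 1 = c" "mk a b c d $ 2 $ 2 = d"
  by (simp_all add: mk_def)

lemma mk_eta: "M = mk (M$1$1) (M$1$2) (M$2$1) (M$2$2)"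
  by (simp add: vec_eq_iff forall_2)

lemma mk_mult: "mk a b c d ** mk e f g h = mk (a*e+b*g) (a*f+b*h) (c*e+d*g) (c*f+d*h)"
  by (simp add: vec_eq_iff forall_2 matrix_matrix_mult_def sum_2)

lemma mk_one: "(mat 1 :: int^2^2) = mk 1 0 0 1"
  by (simp add: vec_eq_iff forall_2 mat_def)

lemma mk_inj: "mk a b c d = mk e f g h \<longleftrightarrow> a = e \<and> b = f \<and> c = g \<and> d = h"
  by (metis mk_nth)

lemma mk_det: "det (mk a b c d) = a*d - b*c"
  by (simp add: det_2)

lemma mk_D1: "mk a b c d \<in> D1 \<longleftrightarrow> 0 \<le> a \<and> 0 \<le> b \<and> 0 \<le> c \<and> 0 \<le> d \<and> a*d - b*c = 1"
  by (simp add: D1_def forall_2 mk_det)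

lemma inv_unique:
  fixes M N :: "int^2^2"
  assumes "M ** N = mat 1" "N ** M = mat 1"
  shows "matrix_inv M = N"
proof -
  have "\<exists>X. M ** X = mat 1 \<and> X ** M = mat 1" using assms by blast
  then have X: "M ** matrix_inv M = mat 1 \<and> matrix_inv M ** M = mat 1"
    unfolding matrix_inv_def by (rule someI_ex)
  have "matrix_inv M = matrix_inv M ** (M ** N)" using assms by simp
  also have "\<dots> = (matrix_inv M ** M) ** N" by (simp add: matrix_mul_assoc)
  also have "\<dots> = N" using X by simp
  finally show ?thesis .
qed

theorem lemma8:
  assumes "W \<in> D1"
  shows "Lm ** matrix_inv (Lm ** W ** Rm) ** Rm \<in> D1
     \<and> (\<exists>U\<in>D1. Lm ** matrix_inv (Lm ** W ** Rm) ** Rm = Rm ** U)"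
proof -
  obtain a b c d where W: "W = mk a b c d" by (meson mk_eta)
  have h: "0 \<le> a" "0 \<le> b" "0 \<le> c" "0 \<le> d" "a*d - b*c = 1" using assms by (auto simp: W mk_D1)
  have L: "Lm = mk 1 0 1 1" by (simp add: Lm_def mk_def)
  have R: "Rm = mk 1 1 0 1" by (simp add: Rm_def mk_def)
  have P: "Lm ** W ** Rm = mk a (a+b) (a+c) (a+b+c+d)" by (simp add: L R W mk_mult add.assoc add.left_commute)
  have I: "matrix_inv (Lm ** W ** Rm) = mk (a+b+c+d) (-(a+b)) (-(a+c)) a"
    unfolding P by (rule inv_unique) (use h in \<open>simp_all add: mk_mult mk_one mk_inj algebra_simps\<close>)
  have E: "Lm ** matrix_inv (Lm ** W ** Rm) ** Rm = mk (a+b+c+d) (c+d) (b+d) d"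
    unfolding I by (simp add: L R mk_mult mk_inj algebra_simps)
  have E2: "mk (a+b+c+d) (c+d) (b+d) d = Rm ** mk (a+c) c (b+d) d"
    by (simp add: R mk_mult algebra_simps)
  show ?thesis unfolding E
  proof
    show "mk (a+b+c+d) (c+d) (b+d) d \<in> D1" using h by (simp add: mk_D1 algebra_simps)
    show "\<exists>U\<in>D1. mk (a+b+c+d) (c+d) (b+d) d = Rm ** U"
      using h E2 by (intro bexI[of _ "mk (a+c) c (b+d) d"]) (simp_all add: mk_D1 algebra_simps)
  qed
qed

end
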